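(* Let $p_1, \dots, p_N \in \mathbb{R}$. For each $j$, let $C^j$ be the elementary symmetric filter with $c^j(-1) = c^j(1) = 1$, $c^j(0) = p_j$, and $c^j(t) = 0$ for $|t| > 1$. Let $C_N = C^1 * C^2 * \cdots * C^N$. Then $C_N$ is invertible if and only if each $C^j$, $j = 1, \dots, N$, is invertible.
   Context: Sequences are indexed by $\mathbb{Z}$. The convolution of sequences $A, B$ is $(A * B)(t) = \sum_{k} a(k) b(t-k)$. The unit sequence $I$ is defined by $I(0) = 1$ and $I(t) = 0$ for $t \neq 0$. A finite filter $C$ is called invertible if there exists a sequence $Z = (z(t))_{t\in\mathbb{Z}}$ with $C * Z = I$ such that $Z$ is summable, i.e. $\sum_t |z(t)| < \infty$, and its entries converge to $0$ exponentially fast, i.e. $|z(t)| \le K r^{|t|}$ for some constants $K > 0$ and $0 < r < 1$. *)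

theory Defs
  imports "HOL-Analysis.Analysis"
begin

type_synonym zseq = "int \<Rightarrow> real"

definition conv :: "zseq \<Rightarrow> zseq \<Rightarrow> zseq" where
  "conv A B = (\<lambda>t. \<Sum>\<^sub>\<infinity>k\<in>(UNIV::int set). A k * B (t - k))"

definition unit_seq :: zseq where
  "unit_seq = (\<lambda>t. if t = 0 then 1 else 0)"

definition finite_filter :: "zseq \<Rightarrow> bool" where
  "finite_filter C \<longleftrightarrow> finite {t. C t \<noteq> 0}"

definition invertible_filter :: "zseq \<Rightarrow> bool" where
  "invertible_filter C \<longleftrightarrow> finite_filter C \<and>
     (\<exists>Z. conv C Z = unit_seq \<and>
          (\<lambda>t. \<bar>Z t\<bar>) summable_on (UNIV::int set) \<and>
          (\<exists>K r. K > 0 \<and> 0 < r \<and> r < 1 \<and> (\<forall>t. \<bar>Z t\<bar> \<le> K * r ^ nat \<bar>t\<bar>)))"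

definition elem_filter :: "real \<Rightarrow> zseq" where
  "elem_filter p = (\<lambda>t. if t = 0 then p else if \<bar>t\<bar> = 1 then 1 else 0)"

fun conv_prod :: "(nat \<Rightarrow> zseq) \<Rightarrow> nat \<Rightarrow> zseq" where
  "conv_prod C 0 = unit_seq"
| "conv_prod C (Suc n) = conv (conv_prod C n) (C (Suc n))"

end

theory Submission
  imports Defs
begin

definition l1 :: "zseq \<Rightarrow> bool" where
  "l1 A \<longleftrightarrow> (\<lambda>t. \<bar>A t\<bar>) summable_on UNIV"

definition bnd :: "zseq \<Rightarrow> bool" where
  "bnd W \<longleftrightarrow> (\<exists>M. \<forall>t. \<bar>W t\<bar> \<le> M)"

lemma l1_iff: "l1 A \<longleftrightarrow> A summable_on UNIV"
  unfolding l1_def using summable_on_iff_abs_summable_on_real[of A UNIV] by (simp add: real_norm_def)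

lemma conv_comm: "conv A B = conv B A"
proof
  fix t
  show "conv A B t = conv B A t"
    unfolding conv_def
    by (rule infsum_reindex_bij_witness[where i="\<lambda>k. t - k" and j="\<lambda>k. t - k"]) (auto simp: mult.commute)
qed

lemma conv_unit_left: "conv unit_seq X = X"
proof
  fix t
  have "conv unit_seq X t = (\<Sum>\<^sub>\<infinity>k\<in>{0}. unit_seq k * X (t - k))"
    unfolding conv_def by (rule infsum_cong_neutral) (auto simp: unit_seq_def)
  then show "conv unit_seq X t = X t" by (simp add: unit_seq_def)
qed

lemma conv_zero_right: "conv A (\<lambda>_. 0) = (\<lambda>_. 0)"
  unfolding conv_def by simp

lemma prod_l1:
  assumes "l1 A" "l1 B"
  shows "(\<lambda>(k,j). \<bar>A k\<bar> * \<bar>B (j - k)\<bar>) summable_on UNIV"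
proof -
  let ?S = "\<Sum>\<^sub>\<infinity>m. \<bar>B m\<bar>"
  have 1: "(\<lambda>(k,m). \<bar>A k\<bar> * \<bar>B m\<bar>) summable_on (UNIV \<times> UNIV)"
  proof (rule summable_on_SigmaI[where g="\<lambda>k. \<bar>A k\<bar> * ?S"])
    fix k :: int
    show "((\<lambda>m. case (k, m) of (k, m) \<Rightarrow> \<bar>A k\<bar> * \<bar>B m\<bar>) has_sum \<bar>A k\<bar> * ?S) UNIV"
      using has_sum_cmult_right[OF has_sum_infsum[OF assms(2)[unfolded l1_def]], of "\<bar>A k\<bar>"] by simp
  next
    show "(\<lambda>k. \<bar>A k\<bar> * ?S) summable_on UNIV"
      using summable_on_cmult_left[OF assms(1)[unfolded l1_def]] by simp
  qed auto
  have bij: "bij_betw (\<lambda>(k,j). (k, j - k)) (UNIV::(int\<times>int) set) UNIV"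
    by (rule bij_betwI[where g="\<lambda>(k,m). (k, m + k)"]) auto
  have eq: "(\<lambda>x. (\<lambda>(k,m). \<bar>A k\<bar> * \<bar>B m\<bar>) ((\<lambda>(k,j). (k, j - k)) x)) = (\<lambda>(k,j). \<bar>A k\<bar> * \<bar>B (j - k)\<bar>)"
    by auto
  have "(\<lambda>x. (\<lambda>(k,m). \<bar>A k\<bar> * \<bar>B m\<bar>) ((\<lambda>(k,j). (k, j - k)) x)) summable_on UNIV"
    using summable_on_reindex_bij_betw[OF bij, of "\<lambda>(k,m). \<bar>A k\<bar> * \<bar>B m\<bar>"] 1 by simp
  then show ?thesis unfolding eq .
qed

lemma l1_bnd:
  assumes "l1 A" shows "bnd A"
proof -
  have "\<bar>A t\<bar> \<le> (\<Sum>\<^sub>\<infinity>s. \<bar>A s\<bar>)" for t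
  proof -
    have "(\<Sum>\<^sub>\<infinity>s\<in>{t}. \<bar>A s\<bar>) \<le> (\<Sum>\<^sub>\<infinity>s. \<bar>A s\<bar>)"
      by (rule infsum_mono_neutral) (use assms in \<open>auto simp: l1_def\<close>)
    then show ?thesis by simp
  qed
  then show ?thesis unfolding bnd_def by blast
qed

lemma conv_assoc:
  assumes A: "l1 A" and B: "l1 B" and W: "bnd W"
  shows "conv (conv A B) W = conv A (conv B W)"
proof
  fix t
  obtain M where M: "\<And>t. \<bar>W t\<bar> \<le> M" using W unfolding bnd_def by blast
  define G where "G = (\<lambda>(k,j). A k * B (j - k) * W (t - j))"
  have P: "(\<lambda>(k,j). \<bar>A k\<bar> * \<bar>B (j - k)\<bar>) summable_on UNIV" by (rule prod_l1[OF A B])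
  have "(\<lambda>x. \<bar>G x\<bar>) summable_on UNIV"
  proof (rule summable_on_comparison_test[OF summable_on_cmult_right[OF P, of M]])
    fix x :: "int \<times> int"
    obtain k j where x: "x = (k,j)" by fastforce
    have "\<bar>G x\<bar> = (\<bar>A k\<bar> * \<bar>B (j - k)\<bar>) * \<bar>W (t - j)\<bar>" by (simp add: G_def x abs_mult)
    also have "\<dots> \<le> (\<bar>A k\<bar> * \<bar>B (j - k)\<bar>) * M" by (rule mult_left_mono[OF M]) simp
    finally show "\<bar>G x\<bar> \<le> M * (case x of (k, j) \<Rightarrow> \<bar>A k\<bar> * \<bar>B (j - k)\<bar>)" by (simp add: x mult.commute)
  qed simp
  then have Gs: "G summable_on UNIV"
    using summable_on_iff_abs_summable_on_real[of G UNIV] by (simp add: real_norm_def)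
  have Gs': "(\<lambda>(j,k). G (k,j)) summable_on (UNIV \<times> UNIV)"
  proof -
    have "bij_betw prod.swap (UNIV::(int\<times>int) set) UNIV" by (simp add: bij_swap)
    moreover have "(\<lambda>x. G (prod.swap x)) = (\<lambda>(j,k). G (k,j))" by auto
    ultimately show ?thesis using summable_on_reindex_bij_betw[of prod.swap UNIV UNIV G] Gs
      by simp
  qed
  have "conv (conv A B) W t = (\<Sum>\<^sub>\<infinity>j. (\<Sum>\<^sub>\<infinity>k. A k * B (j - k)) * W (t - j))"
    by (simp add: conv_def)
  also have "\<dots> = (\<Sum>\<^sub>\<infinity>j. \<Sum>\<^sub>\<infinity>k. G (k,j))"
    by (simp add: G_def infsum_cmult_left')
  also have "\<dots> = (\<Sum>\<^sub>\<infinity>k. \<Sum>\<^sub>\<infinity>j. G (k,j))"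
    by (rule infsum_swap_banach[where f="\<lambda>j k. G (k,j)"]) (use Gs' in simp)
  also have "\<dots> = (\<Sum>\<^sub>\<infinity>k. A k * (\<Sum>\<^sub>\<infinity>j. B (j - k) * W (t - j)))"
    by (simp add: G_def infsum_cmult_right'[symmetric] mult.assoc)
  also have "\<dots> = (\<Sum>\<^sub>\<infinity>k. A k * conv B W (t - k))"
  proof -
    have "(\<Sum>\<^sub>\<infinity>j. B (j - k) * W (t - j)) = conv B W (t - k)" for k
      unfolding conv_def
      by (rule infsum_reindex_bij_witness[where i="\<lambda>m. m + k" and j="\<lambda>j. j - k"]) auto
    then show ?thesis by simp
  qed
  also have "\<dots> = conv A (conv B W) t" by (simp add: conv_def)
  finally show "conv (conv A B) W t = conv A (conv B W) t" .
qed


lemma fin_l1: assumes "finite_filter A" shows "l1 A"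
proof -
  have f: "finite {t. A t \<noteq> 0}" using assms unfolding finite_filter_def .
  have "(\<lambda>t. \<bar>A t\<bar>) summable_on {t. A t \<noteq> 0}" using f by simp
  moreover have "(\<lambda>t. \<bar>A t\<bar>) summable_on {t. A t \<noteq> 0} \<longleftrightarrow> (\<lambda>t. \<bar>A t\<bar>) summable_on UNIV"
    by (rule summable_on_cong_neutral) auto
  ultimately show ?thesis unfolding l1_def by simp
qed

lemma fin_conv:
  assumes "finite_filter A" "finite_filter B"
  shows "finite_filter (conv A B)"
proof -
  let ?SA = "{t. A t \<noteq> 0}" and ?SB = "{t. B t \<noteq> 0}"
  have "{t. conv A B t \<noteq> 0} \<subseteq> (\<lambda>(a,b). a + b) ` (?SA \<times> ?SB)"
  proof
    fix t assume t: "t \<in> {t. conv A B t \<noteq> 0}"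
    show "t \<in> (\<lambda>(a,b). a + b) ` (?SA \<times> ?SB)"
    proof (rule ccontr)
      assume nt: "t \<notin> (\<lambda>(a,b). a + b) ` (?SA \<times> ?SB)"
      have "\<And>k. A k * B (t - k) = 0"
      proof -
        fix k show "A k * B (t - k) = 0"
        proof (rule ccontr)
          assume "A k * B (t - k) \<noteq> 0"
          then have "(k, t - k) \<in> ?SA \<times> ?SB" by auto
          then have "(\<lambda>(a,b). a + b) (k, t - k) \<in> (\<lambda>(a,b). a + b) ` (?SA \<times> ?SB)" by blast
          with nt show False by simp
        qed
      qed
      then have "conv A B t = 0" unfolding conv_def by (simp add: infsum_0)
      with t show False by simp
    qed
  qed
  moreover have "finite ((\<lambda>(a,b). a + b) ` (?SA \<times> ?SB))"
    using assms unfolding finite_filter_def by simp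
  ultimately show ?thesis unfolding finite_filter_def by (rule finite_subset)
qed

lemma fin_elem: "finite_filter (elem_filter p)"
proof -
  have "{t. elem_filter p t \<noteq> 0} \<subseteq> {-1,0,1}" by (auto simp: elem_filter_def abs_if split: if_splits)
  then show ?thesis unfolding finite_filter_def by (rule finite_subset) simp
qed

lemma fin_unit: "finite_filter unit_seq"
proof -
  have "{t. unit_seq t \<noteq> 0} \<subseteq> {0}" by (auto simp: unit_seq_def)
  then show ?thesis unfolding finite_filter_def by (rule finite_subset) simp
qed

lemma fin_prod: "finite_filter (conv_prod (\<lambda>j. elem_filter (p j)) N)"
  by (induction N) (auto intro: fin_conv fin_elem fin_unit)

lemma conv_elem: "conv (elem_filter p) X t = X (t + 1) + p * X t + X (t - 1)"
proof -
  have "conv (elem_filter p) X t = (\<Sum>\<^sub>\<infinity>k\<in>{-1,0,1}. elem_filter p k * X (t - k))"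
    unfolding conv_def by (rule infsum_cong_neutral) (auto simp: elem_filter_def abs_if)
  also have "\<dots> = X (t + 1) + p * X t + X (t - 1)"
    by (simp add: elem_filter_def)
  finally show ?thesis .
qed

lemma annih:
  assumes "j \<in> {1..N}" "conv (C j) w = (\<lambda>_. 0)" "bnd w" "\<And>i. finite_filter (C i)"
  shows "conv (conv_prod C N) w = (\<lambda>_. 0)"
  using assms(1)
proof (induction N)
  case 0 then show ?case by simp
next
  case (Suc N)
  have finP: "finite_filter (conv_prod C N)"
    by (induction N) (auto intro: fin_conv fin_unit assms(4))
  show ?case
  proof (cases "j = Suc N")
    case True
    have "conv (conv_prod C (Suc N)) w = conv (conv_prod C N) (conv (C (Suc N)) w)"
      by (simp add: conv_assoc fin_l1 finP assms(3,4))
    also have "\<dots> = (\<lambda>_. 0)" using assms(2) True by (simp add: conv_zero_right)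
    finally show ?thesis .
  next
    case False
    then have j: "j \<in> {1..N}" using Suc.prems by auto
    have "conv (conv_prod C (Suc N)) w = conv (conv (C (Suc N)) (conv_prod C N)) w"
      by (simp add: conv_comm)
    also have "\<dots> = conv (C (Suc N)) (conv (conv_prod C N) w)"
      by (simp add: conv_assoc fin_l1 finP assms(3,4))
    also have "\<dots> = (\<lambda>_. 0)" using Suc.IH[OF j] by (simp add: conv_zero_right)
    finally show ?thesis .
  qed
qed

lemma not_inv:
  assumes "finite_filter P" "bnd w" "w 0 = 1" "conv P w = (\<lambda>_. 0)"
  shows "\<not> invertible_filter P"
proof
  assume "invertible_filter P"
  then obtain Z where Z: "conv P Z = unit_seq" "(\<lambda>t. \<bar>Z t\<bar>) summable_on UNIV"
    unfolding invertible_filter_def by blast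
  have "w = conv (conv Z P) w" using Z(1) by (simp add: conv_comm conv_unit_left)
  also have "\<dots> = conv Z (conv P w)"
    by (rule conv_assoc) (use Z assms fin_l1[OF assms(1)] in \<open>auto simp: l1_def\<close>)
  also have "\<dots> = (\<lambda>_. 0)" using assms(4) by (simp add: conv_zero_right)
  finally show False using assms(3) by (metis zero_neq_one)
qed

lemma cos_annih:
  assumes "\<bar>p\<bar> \<le> 2"
  shows "\<exists>w. bnd w \<and> w 0 = 1 \<and> conv (elem_filter p) w = (\<lambda>_. 0)"
proof -
  define \<theta> where "\<theta> = arccos (- p / 2)"
  have c: "cos \<theta> = - p / 2" unfolding \<theta>_def using assms by (intro cos_arccos) auto
  define w where "w = (\<lambda>t::int. cos (\<theta> * real_of_int t))"
  have "conv (elem_filter p) w t = 0" for t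
  proof -
    have "conv (elem_filter p) w t = cos (\<theta> * t + \<theta>) + p * cos (\<theta> * t) + cos (\<theta> * t - \<theta>)"
      by (simp add: conv_elem w_def algebra_simps)
    also have "\<dots> = 2 * cos (\<theta> * t) * cos \<theta> + p * cos (\<theta> * t)"
      by (simp add: cos_add cos_diff)
    also have "\<dots> = 0" by (simp add: c)
    finally show ?thesis .
  qed
  moreover have "bnd w" unfolding bnd_def w_def by (metis abs_cos_le_one)
  moreover have "w 0 = 1" by (simp add: w_def)
  ultimately show ?thesis by blast
qed


definition wl1 :: "real \<Rightarrow> zseq \<Rightarrow> bool" where
  "wl1 \<rho> A \<longleftrightarrow> (\<lambda>t. \<bar>A t\<bar> * \<rho> ^ nat \<bar>t\<bar>) summable_on UNIV"

lemma wl1_mono: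
  assumes "0 \<le> \<rho>'" "\<rho>' \<le> \<rho>" "wl1 \<rho> A" shows "wl1 \<rho>' A"
  unfolding wl1_def
proof (rule summable_on_comparison_test[OF assms(3)[unfolded wl1_def]])
  fix t show "\<bar>A t\<bar> * \<rho>' ^ nat \<bar>t\<bar> \<le> \<bar>A t\<bar> * \<rho> ^ nat \<bar>t\<bar>"
    by (rule mult_left_mono[OF power_mono]) (use assms in auto)
qed (use assms in auto)

lemma wl1_l1:
  assumes "1 \<le> \<rho>" "wl1 \<rho> A" shows "l1 A"
proof -
  have "wl1 1 A" by (rule wl1_mono[OF _ assms(1,2)]) simp
  then show ?thesis by (simp add: wl1_def l1_def)
qed

lemma wl1_decay:
  assumes "1 < \<rho>" "wl1 \<rho> Z"
  shows "\<exists>K r. K > 0 \<and> 0 < r \<and> r < 1 \<and> (\<forall>t. \<bar>Z t\<bar> \<le> K * r ^ nat \<bar>t\<bar>)"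
proof -
  define S where "S = (\<Sum>\<^sub>\<infinity>t. \<bar>Z t\<bar> * \<rho> ^ nat \<bar>t\<bar>)"
  have S0: "S \<ge> 0" unfolding S_def using assms(1) by (intro infsum_nonneg) auto
  have "\<bar>Z t\<bar> \<le> (S + 1) * (1 / \<rho>) ^ nat \<bar>t\<bar>" for t
  proof -
    have "(\<Sum>\<^sub>\<infinity>s\<in>{t}. \<bar>Z s\<bar> * \<rho> ^ nat \<bar>s\<bar>) \<le> S"
      unfolding S_def
      by (rule infsum_mono_neutral) (use assms in \<open>auto simp: wl1_def\<close>)
    then have 1: "\<bar>Z t\<bar> * \<rho> ^ nat \<bar>t\<bar> \<le> S" by simp
    have pos: "\<rho> ^ nat \<bar>t\<bar> > 0" using assms by simp
    have "\<bar>Z t\<bar> \<le> S / \<rho> ^ nat \<bar>t\<bar>" using 1 pos by (simp add: field_simps)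
    also have "\<dots> = S * (1 / \<rho>) ^ nat \<bar>t\<bar>" by (simp add: power_one_over)
    also have "\<dots> \<le> (S + 1) * (1 / \<rho>) ^ nat \<bar>t\<bar>"
      by (rule mult_right_mono) (use assms in auto)
    finally show ?thesis .
  qed
  moreover have "S + 1 > 0" "0 < 1 / \<rho>" "1 / \<rho> < 1" using S0 assms by auto
  ultimately show ?thesis by blast
qed

lemma wl1_conv:
  assumes "1 \<le> \<rho>" "wl1 \<rho> A" "wl1 \<rho> B"
  shows "wl1 \<rho> (conv A B)"
proof -
  define A' where "A' = (\<lambda>k. \<bar>A k\<bar> * \<rho> ^ nat \<bar>k\<bar>)"
  define B' where "B' = (\<lambda>k. \<bar>B k\<bar> * \<rho> ^ nat \<bar>k\<bar>)"
  have A'0: "A' k \<ge> 0" and B'0: "B' k \<ge> 0" for k using assms(1) by (auto simp: A'_def B'_def)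
  have "l1 A'" "l1 B'" using assms(2,3) A'0 B'0 by (auto simp: l1_def wl1_def A'_def B'_def)
  from prod_l1[OF this] have P: "(\<lambda>(k,j). A' k * B' (j - k)) summable_on UNIV"
    using A'0 B'0 by simp
  define H where "H = (\<lambda>j k. A' k * B' (j - k))"
  have Hs: "(\<lambda>(j,k). H j k) summable_on (UNIV \<times> UNIV)"
  proof -
    have "bij_betw prod.swap (UNIV::(int\<times>int) set) UNIV" by (simp add: bij_swap)
    moreover have "(\<lambda>x. (\<lambda>(k,j). A' k * B' (j - k)) (prod.swap x)) = (\<lambda>(j,k). H j k)"
      by (auto simp: H_def)
    ultimately show ?thesis
      using summable_on_reindex_bij_betw[of prod.swap UNIV UNIV "\<lambda>(k,j). A' k * B' (j - k)"] P
      by simp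
  qed
  have Hj: "H j summable_on UNIV" for j
    using summable_on_SigmaD1[of H UNIV "\<lambda>_. UNIV" j] Hs by simp
  have Hsum: "(\<lambda>j. \<Sum>\<^sub>\<infinity>k. H j k) summable_on UNIV"
    using summable_on_SigmaD[of "\<lambda>(j,k). H j k" UNIV "\<lambda>_. UNIV"] Hs Hj by simp
  have pw: "\<bar>A k * B (j - k)\<bar> * \<rho> ^ nat \<bar>j\<bar> \<le> H j k" for j k
  proof -
    have "\<rho> ^ nat \<bar>j\<bar> \<le> \<rho> ^ (nat \<bar>k\<bar> + nat \<bar>j - k\<bar>)"
      by (rule power_increasing) (use assms(1) in auto)
    also have "\<dots> = \<rho> ^ nat \<bar>k\<bar> * \<rho> ^ nat \<bar>j - k\<bar>" by (simp add: power_add)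
    finally have "\<bar>A k * B (j - k)\<bar> * \<rho> ^ nat \<bar>j\<bar> \<le> \<bar>A k * B (j - k)\<bar> * (\<rho> ^ nat \<bar>k\<bar> * \<rho> ^ nat \<bar>j - k\<bar>)"
      by (rule mult_left_mono) simp
    then show ?thesis by (simp add: H_def A'_def B'_def abs_mult mult_ac)
  qed
  have pw1: "\<bar>A k * B (j - k)\<bar> \<le> H j k" for j k
  proof -
    have "\<bar>A k * B (j - k)\<bar> * 1 \<le> \<bar>A k * B (j - k)\<bar> * \<rho> ^ nat \<bar>j\<bar>"
      by (rule mult_left_mono) (use assms(1) in auto)
    then show ?thesis using pw[of k j] by linarith
  qed
  have abs1: "(\<lambda>k. \<bar>A k * B (j - k)\<bar>) summable_on UNIV" for j
    by (rule summable_on_comparison_test[OF Hj]) (use pw1 in auto)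
  have abs2: "(\<lambda>k. \<bar>A k * B (j - k)\<bar> * \<rho> ^ nat \<bar>j\<bar>) summable_on UNIV" for j
    by (rule summable_on_comparison_test[OF Hj]) (use pw assms(1) in auto)
  show ?thesis unfolding wl1_def
  proof (rule summable_on_comparison_test[OF Hsum])
    fix j
    have "\<bar>conv A B j\<bar> \<le> (\<Sum>\<^sub>\<infinity>k. \<bar>A k * B (j - k)\<bar>)"
      unfolding conv_def using norm_infsum_bound[of "\<lambda>k. A k * B (j - k)" UNIV] abs1[of j]
      by (simp add: real_norm_def)
    then have "\<bar>conv A B j\<bar> * \<rho> ^ nat \<bar>j\<bar> \<le> (\<Sum>\<^sub>\<infinity>k. \<bar>A k * B (j - k)\<bar>) * \<rho> ^ nat \<bar>j\<bar>"
      by (rule mult_right_mono) (use assms(1) in auto)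
    also have "\<dots> = (\<Sum>\<^sub>\<infinity>k. \<bar>A k * B (j - k)\<bar> * \<rho> ^ nat \<bar>j\<bar>)"
      by (simp add: infsum_cmult_left')
    also have "\<dots> \<le> (\<Sum>\<^sub>\<infinity>k. H j k)"
      by (rule infsum_mono[OF abs2 Hj]) (rule pw)
    finally show "\<bar>conv A B j\<bar> * \<rho> ^ nat \<bar>j\<bar> \<le> (\<Sum>\<^sub>\<infinity>k. H j k)" .
  next
    fix j show "0 \<le> \<bar>conv A B j\<bar> * \<rho> ^ nat \<bar>j\<bar>" using assms(1) by simp
  qed
qed

lemma geom_int:
  fixes q :: real assumes "0 \<le> q" "q < 1"
  shows "(\<lambda>t::int. q ^ nat \<bar>t\<bar>) summable_on UNIV"
proof -
  have g: "(\<lambda>n::nat. q ^ n) summable_on UNIV"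
    by (rule summable_nonneg_imp_summable_on) (use assms in \<open>auto intro: summable_geometric\<close>)
  have 1: "(\<lambda>t::int. q ^ nat \<bar>t\<bar>) summable_on (int ` UNIV)"
    by (subst summable_on_reindex) (use g in \<open>auto simp: o_def inj_on_def\<close>)
  have 2: "(\<lambda>t::int. q ^ nat \<bar>t\<bar>) summable_on ((\<lambda>n. - int n) ` UNIV)"
    by (subst summable_on_reindex) (use g in \<open>auto simp: o_def inj_on_def\<close>)
  have U: "int ` UNIV \<union> (\<lambda>n. - int n) ` UNIV = (UNIV :: int set)"
  proof (rule set_eqI)
    fix t :: int
    show "t \<in> int ` UNIV \<union> (\<lambda>n. - int n) ` UNIV \<longleftrightarrow> t \<in> UNIV"
    proof (cases "t \<ge> 0")
      case True then have "t = int (nat t)" by simp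
      then show ?thesis by blast
    next
      case False then have "t = - int (nat (- t))" by simp
      then show ?thesis by blast
    qed
  qed
  show ?thesis using summable_on_union[OF 1 2] unfolding U .
qed


lemma root_pos:
  fixes p :: real assumes "p > 2"
  shows "\<exists>r. -1 < r \<and> r < 0 \<and> r * r + p * r + 1 = 0"
proof -
  define s where "s = sqrt (p\<^sup>2 - 4)"
  have p4: "4 \<le> p\<^sup>2"
  proof -
    have "2 * 2 \<le> p * p" using assms by (intro mult_mono) auto
    then show ?thesis by (simp add: power2_eq_square)
  qed
  have s0: "s \<ge> 0" and ss: "s * s = p\<^sup>2 - 4" using p4 by (auto simp: s_def)
  have sp: "s < p"
  proof -
    have "sqrt (p\<^sup>2 - 4) < sqrt (p\<^sup>2)" by (subst real_sqrt_less_iff) simp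
    moreover have "sqrt (p\<^sup>2) = p" using assms real_sqrt_abs[of p] by simp
    ultimately show ?thesis unfolding s_def by linarith
  qed
  have sp2: "s > p - 2"
  proof -
    have "(p - 2)\<^sup>2 < p\<^sup>2 - 4" using assms by (simp add: power2_eq_square algebra_simps)
    then have "sqrt ((p - 2)\<^sup>2) < sqrt (p\<^sup>2 - 4)" by (subst real_sqrt_less_iff)
    moreover have "sqrt ((p - 2)\<^sup>2) = p - 2" using assms real_sqrt_abs[of "p - 2"] by simp
    ultimately show ?thesis unfolding s_def by linarith
  qed
  define r where "r = (s - p) / 2"
  have "r * r + p * r + 1 = (s * s - p * p + 4) / 4" by (simp add: r_def field_simps power2_eq_square)
  also have "\<dots> = 0" using ss by (simp add: power2_eq_square)
  finally show ?thesis using sp sp2 by (intro exI[of _ r]) (auto simp: r_def)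
qed

lemma root_ex:
  fixes p :: real assumes "\<bar>p\<bar> > 2"
  shows "\<exists>r. 0 < \<bar>r\<bar> \<and> \<bar>r\<bar> < 1 \<and> r * r + p * r + 1 = 0"
proof (cases "p > 2")
  case True
  from root_pos[OF True] obtain r where "-1 < r" "r < 0" "r * r + p * r + 1 = 0" by blast
  then show ?thesis by (intro exI[of _ r]) auto
next
  case False
  then have "-p > 2" using assms by auto
  from root_pos[OF this] obtain r where "-1 < r" "r < 0" "r * r + (-p) * r + 1 = 0" by blast
  then show ?thesis by (intro exI[of _ "-r"]) auto
qed

lemma elem_inv:
  assumes "\<bar>p\<bar> > 2"
  shows "\<exists>Z \<rho>. \<rho> > 1 \<and> conv (elem_filter p) Z = unit_seq \<and> wl1 \<rho> Z"
proof -
  obtain r where r: "0 < \<bar>r\<bar>" "\<bar>r\<bar> < 1" "r * r + p * r + 1 = 0" using root_ex[OF assms] by blast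
  have c0: "2 * r + p \<noteq> 0"
  proof
    assume "2 * r + p = 0"
    then have "p = -2 * r" by simp
    then show False using r assms by auto
  qed
  define c where "c = 1 / (2 * r + p)"
  define Z where "Z = (\<lambda>t::int. c * r ^ nat \<bar>t\<bar>)"
  have inv: "conv (elem_filter p) Z t = unit_seq t" for t
  proof -
    have e: "conv (elem_filter p) Z t = c * (r ^ nat \<bar>t + 1\<bar> + p * r ^ nat \<bar>t\<bar> + r ^ nat \<bar>t - 1\<bar>)"
      by (simp add: conv_elem Z_def algebra_simps)
    consider "t = 0" | n where "t = int (Suc n)" | n where "t = - int (Suc n)"
      by (metis int_cases2 not0_implies_Suc of_nat_0 minus_zero)
    then show ?thesis
    proof cases
      case 1
      have "conv (elem_filter p) Z t = c * (2 * r + p)" using e 1 by simp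
      then show ?thesis using c0 1 by (simp add: c_def unit_seq_def)
    next
      case 2
      have a: "nat \<bar>t + 1\<bar> = Suc (Suc n)" "nat \<bar>t\<bar> = Suc n" "nat \<bar>t - 1\<bar> = n" using 2 by auto
      have "r ^ Suc (Suc n) + p * r ^ Suc n + r ^ n = r ^ n * (r * r + p * r + 1)"
        by (simp add: algebra_simps)
      moreover have "conv (elem_filter p) Z t = c * (r ^ Suc (Suc n) + p * r ^ Suc n + r ^ n)" using e a by simp
      moreover have "unit_seq t = 0" using 2 by (simp add: unit_seq_def)
      ultimately show ?thesis using r(3) by simp
    next
      case 3
      have a: "nat \<bar>t - 1\<bar> = Suc (Suc n)" "nat \<bar>t\<bar> = Suc n" "nat \<bar>t + 1\<bar> = n" using 3 by auto
      have "r ^ n + p * r ^ Suc n + r ^ Suc (Suc n) = r ^ n * (r * r + p * r + 1)"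
        by (simp add: algebra_simps)
      moreover have "conv (elem_filter p) Z t = c * (r ^ n + p * r ^ Suc n + r ^ Suc (Suc n))" using e a by simp
      moreover have "unit_seq t = 0" using 3 by (simp add: unit_seq_def)
      ultimately show ?thesis using r(3) by simp
    qed
  qed
  define q where "q = sqrt \<bar>r\<bar>"
  have q: "0 < q" "q < 1" using r by (auto simp: q_def)
  define \<rho> where "\<rho> = 1 / q"
  have \<rho>: "\<rho> > 1" using q by (simp add: \<rho>_def)
  have eq: "(\<lambda>t. \<bar>Z t\<bar> * \<rho> ^ nat \<bar>t\<bar>) = (\<lambda>t. \<bar>c\<bar> * q ^ nat \<bar>t\<bar>)"
  proof
    fix t
    have qq: "q * q * (1 / q) = q" using q by simp
    have "\<bar>r\<bar> = q * q" using r by (simp add: q_def)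
    then have "\<bar>Z t\<bar> * \<rho> ^ nat \<bar>t\<bar> = \<bar>c\<bar> * ((q * q) ^ nat \<bar>t\<bar> * (1 / q) ^ nat \<bar>t\<bar>)"
      by (simp add: Z_def abs_mult power_abs \<rho>_def)
    also have "\<dots> = \<bar>c\<bar> * (q * q * (1 / q)) ^ nat \<bar>t\<bar>" by (simp only: power_mult_distrib)
    also have "\<dots> = \<bar>c\<bar> * q ^ nat \<bar>t\<bar>" using qq by (simp only:)
    finally show "\<bar>Z t\<bar> * \<rho> ^ nat \<bar>t\<bar> = \<bar>c\<bar> * q ^ nat \<bar>t\<bar>" .
  qed
  have "wl1 \<rho> Z" unfolding wl1_def eq
    by (rule summable_on_cmult_right[OF geom_int]) (use q in auto)
  then show ?thesis using inv \<rho> by blast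
qed

lemma elem_iff: "invertible_filter (elem_filter p) \<longleftrightarrow> \<bar>p\<bar> > 2"
proof
  assume i: "invertible_filter (elem_filter p)"
  show "\<bar>p\<bar> > 2"
  proof (rule ccontr)
    assume "\<not> \<bar>p\<bar> > 2"
    then obtain w where "bnd w" "w 0 = 1" "conv (elem_filter p) w = (\<lambda>_. 0)"
      using cos_annih by force
    with not_inv[OF fin_elem] i show False by blast
  qed
next
  assume "\<bar>p\<bar> > 2"
  then obtain Z \<rho> where Z: "\<rho> > 1" "conv (elem_filter p) Z = unit_seq" "wl1 \<rho> Z"
    using elem_inv by blast
  show "invertible_filter (elem_filter p)"
    unfolding invertible_filter_def
    using fin_elem Z wl1_l1[OF _ Z(3)] wl1_decay[OF Z(1,3)] by (auto simp: l1_def)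
qed

lemma wl1_unit: "wl1 2 unit_seq"
proof -
  have "(\<lambda>t. \<bar>unit_seq t\<bar> * 2 ^ nat \<bar>t\<bar>) summable_on {0::int}" by simp
  moreover have "(\<lambda>t. \<bar>unit_seq t\<bar> * (2::real) ^ nat \<bar>t\<bar>) summable_on {0::int} \<longleftrightarrow>
     (\<lambda>t. \<bar>unit_seq t\<bar> * 2 ^ nat \<bar>t\<bar>) summable_on UNIV"
    by (rule summable_on_cong_neutral) (auto simp: unit_seq_def)
  ultimately show ?thesis unfolding wl1_def by simp
qed

lemma prod_inv:
  assumes "\<forall>j\<in>{1..N}. \<bar>p j\<bar> > 2"
  shows "\<exists>Z \<rho>. \<rho> > 1 \<and> conv (conv_prod (\<lambda>j. elem_filter (p j)) N) Z = unit_seq \<and> wl1 \<rho> Z"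
  using assms
proof (induction N)
  case 0
  then show ?case using wl1_unit by (auto simp: conv_unit_left intro!: exI[of _ unit_seq] exI[of _ 2])
next
  case (Suc N)
  let ?P = "conv_prod (\<lambda>j. elem_filter (p j)) N" and ?C = "elem_filter (p (Suc N))"
  obtain ZP \<rho>1 where P: "\<rho>1 > 1" "conv ?P ZP = unit_seq" "wl1 \<rho>1 ZP" using Suc by auto
  obtain ZC \<rho>2 where C: "\<rho>2 > 1" "conv ?C ZC = unit_seq" "wl1 \<rho>2 ZC"
    using elem_inv Suc.prems by force
  define \<rho> where "\<rho> = min \<rho>1 \<rho>2"
  have \<rho>: "\<rho> > 1" using P C by (simp add: \<rho>_def)
  have wP: "wl1 \<rho> ZP" by (rule wl1_mono[OF _ _ P(3)]) (use \<rho> in \<open>auto simp: \<rho>_def\<close>)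
  have wC: "wl1 \<rho> ZC" by (rule wl1_mono[OF _ _ C(3)]) (use \<rho> in \<open>auto simp: \<rho>_def\<close>)
  have w: "wl1 \<rho> (conv ZC ZP)" using wl1_conv[OF _ wC wP] \<rho> by simp
  have \<rho>': "1 \<le> \<rho>" using \<rho> by simp
  have lP: "l1 ZP" "l1 ZC" "l1 (conv ZC ZP)" using wl1_l1[OF \<rho>'] wP wC w by auto
  have "conv (conv ?P ?C) (conv ZC ZP) = conv ?P (conv ?C (conv ZC ZP))"
    by (rule conv_assoc) (auto intro: fin_l1 fin_prod fin_elem l1_bnd lP)
  also have "conv ?C (conv ZC ZP) = conv (conv ?C ZC) ZP"
    by (rule conv_assoc[symmetric]) (auto intro: fin_l1 fin_prod fin_elem l1_bnd lP)
  also have "\<dots> = ZP" using C(2) by (simp add: conv_unit_left)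
  finally have "conv (conv_prod (\<lambda>j. elem_filter (p j)) (Suc N)) (conv ZC ZP) = unit_seq"
    using P(2) by simp
  then show ?case using w \<rho> by blast
qed

theorem mainTheorem2:
  fixes p :: "nat \<Rightarrow> real" and N :: nat
  shows "invertible_filter (conv_prod (\<lambda>j. elem_filter (p j)) N) \<longleftrightarrow>
         (\<forall>j\<in>{1..N}. invertible_filter (elem_filter (p j)))"
proof
  assume i: "invertible_filter (conv_prod (\<lambda>j. elem_filter (p j)) N)"
  show "\<forall>j\<in>{1..N}. invertible_filter (elem_filter (p j))"
  proof
    fix j assume j: "j \<in> {1..N}"
    show "invertible_filter (elem_filter (p j))"
    proof (rule ccontr)
      assume "\<not> invertible_filter (elem_filter (p j))"
      then have "\<bar>p j\<bar> \<le> 2" by (simp add: elem_iff)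
      then obtain w where w: "bnd w" "w 0 = 1" "conv (elem_filter (p j)) w = (\<lambda>_. 0)"
        using cos_annih by blast
      have "conv (conv_prod (\<lambda>j. elem_filter (p j)) N) w = (\<lambda>_. 0)"
        by (rule annih[OF j]) (use w fin_elem in auto)
      with not_inv[OF fin_prod w(1,2)] i show False by blast
    qed
  qed
next
  assume "\<forall>j\<in>{1..N}. invertible_filter (elem_filter (p j))"
  then have "\<forall>j\<in>{1..N}. \<bar>p j\<bar> > 2" by (simp add: elem_iff)
  from prod_inv[OF this] obtain Z \<rho> where Z: "\<rho> > 1"
    "conv (conv_prod (\<lambda>j. elem_filter (p j)) N) Z = unit_seq" "wl1 \<rho> Z" by blast
  show "invertible_filter (conv_prod (\<lambda>j. elem_filter (p j)) N)"
    unfolding invertible_filter_def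
    using fin_prod Z wl1_l1[OF _ Z(3)] wl1_decay[OF Z(1,3)] by (auto simp: l1_def)
qed

end
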